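(* Let $T$ be a positive integer and $\epsilon = T^{-1/3}$. Consider the forecaster that sets $S_0 = 0$ and, for $t = 1,\ldots,T$, predicts $p_t = 1/2 + \epsilon\cdot\mathrm{sgn}(S_{t-1})$, observes $x_t$, and sets $S_t = S_{t-1} + (x_t - p_t)$. If $x_1,\ldots,x_T$ are independent $\mathrm{Bernoulli}(1/2)$ bits, then $\mathbb{E}[\mathsf{smCE}(x,p)] \le C\,T^{1/3}$ for a universal constant $C$.
   Context: $\mathrm{sgn}(0) = 0$, $\mathrm{sgn}(y)=1$ for $y>0$, $\mathrm{sgn}(y)=-1$ for $y<0$. $\mathsf{smCE}(x,p) = \sup_{f \in \mathcal{F}} \sum_{t=1}^T f(p_t)(x_t - p_t)$, where $\mathcal{F}$ is the family of $1$-Lipschitz functions from $[0,1]$ to $[-1,1]$. *)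

theory Defs
  imports "HOL-Analysis.Analysis"
begin

text \<open>They are represented as functions on all of the reals; restricted to [0,1]
  these are exactly the 1-Lipschitz maps [0,1] -> [-1,1].\<close>
definition smF :: "(real \<Rightarrow> real) set" where
  "smF = {f. 1-lipschitz_on UNIV f \<and> (\<forall>y. \<bar>f y\<bar> \<le> 1)}"

definition smCE :: "nat \<Rightarrow> (nat \<Rightarrow> real) \<Rightarrow> (nat \<Rightarrow> real) \<Rightarrow> real" where
  "smCE T x p = (SUP f\<in>smF. \<Sum>t=1..T. f (p t) * (x t - p t))"

fun fcS :: "real \<Rightarrow> (nat \<Rightarrow> real) \<Rightarrow> nat \<Rightarrow> real" where
  "fcS eps x 0 = 0"
| "fcS eps x (Suc t) = fcS eps x t + (x (Suc t) - (1/2 + eps * sgn (fcS eps x t)))"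

definition fcP :: "real \<Rightarrow> (nat \<Rightarrow> real) \<Rightarrow> nat \<Rightarrow> real" where
  "fcP eps x t = 1/2 + eps * sgn (fcS eps x (t - 1))"

end

theory Submission
  imports Defs
begin

definition Ex :: "nat \<Rightarrow> ((nat \<Rightarrow> real) \<Rightarrow> real) \<Rightarrow> real" where
  "Ex n h = (\<Sum>x\<in>{1..n} \<rightarrow>\<^sub>E {0, 1::real}. h x) / 2 ^ n"

lemma sum_PiE_step:
  assumes "m \<notin> S"
  shows "(\<Sum>x\<in>insert m S \<rightarrow>\<^sub>E {0, 1::real}. h x)
       = (\<Sum>g\<in>S \<rightarrow>\<^sub>E {0, 1::real}. h (g(m := 0)) + h (g(m := 1)))"
proof -
  have "(\<Sum>x\<in>insert m S \<rightarrow>\<^sub>E {0, 1::real}. h x)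
      = (\<Sum>p\<in>{0,1::real} \<times> (S \<rightarrow>\<^sub>E {0, 1::real}). h ((\<lambda>(y, g). g(m := y)) p))"
    unfolding PiE_insert_eq
    by (subst sum.reindex) (use inj_combinator[OF assms, of "\<lambda>_. {0,1::real}"] in auto)
  also have "\<dots> = (\<Sum>y\<in>{0,1::real}. \<Sum>g\<in>S \<rightarrow>\<^sub>E {0, 1::real}. h (g(m := y)))"
    by (simp add: sum.cartesian_product case_prod_beta')
  also have "\<dots> = (\<Sum>g\<in>S \<rightarrow>\<^sub>E {0, 1::real}. h (g(m := 0)) + h (g(m := 1)))"
    by (simp add: sum.distrib)
  finally show ?thesis .
qed

lemma Ex_step: "Ex (Suc n) h = Ex n (\<lambda>x. (h (x(Suc n := 0)) + h (x(Suc n := 1))) / 2)"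
proof -
  have e: "{1..Suc n} = insert (Suc n) {1..n}" by auto
  show ?thesis unfolding Ex_def e
    by (subst sum_PiE_step) (auto simp: sum_divide_distrib[symmetric])
qed

lemma Ex_mono:
  assumes "\<And>x. h x \<le> g x"
  shows "Ex n h \<le> Ex n g"
  unfolding Ex_def by (intro divide_right_mono sum_mono) (auto simp: assms)

lemma Ex_add: "Ex n (\<lambda>x. h x + g x) = Ex n h + Ex n g"
  unfolding Ex_def by (simp add: sum.distrib add_divide_distrib)

lemma Ex_cmult: "Ex n (\<lambda>x. c * h x) = c * Ex n h"
  unfolding Ex_def by (simp add: sum_distrib_left)

lemma Ex_const: "Ex n (\<lambda>x. c) = c"
  unfolding Ex_def by (simp add: card_PiE)

definition Wf :: "real \<Rightarrow> real \<Rightarrow> real" where "Wf a s = exp (a * s) + exp (-(a * s))"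
definition hh :: "real \<Rightarrow> real" where "hh a = (exp (a/2) + exp (-(a/2))) / 2"
definition qq :: "real \<Rightarrow> real" where "qq a = exp (-(a^2)) * hh a"
definition RR :: "real \<Rightarrow> real" where "RR a = hh a * (exp (a^2) - exp (-(a^2)))"

lemma gen_id: "((X * Y * Zm + U * V * Zp) + (X * Y * Zp + U * V * Zm)) / 2
   = X * Y * ((Zp + Zm)/2) + U * V * ((Zp + Zm)/2)" for X Y Zm Zp U V :: real
  by (simp add: field_simps)

lemma avg_eq:
  "(Wf a (s + (0 - (1/2 + a * c))) + Wf a (s + (1 - (1/2 + a * c)))) / 2
   = exp (a * s) * exp (-(a^2 * c)) * hh a + exp (-(a * s)) * exp (a^2 * c) * hh a"
proof -
  have a1: "a * (s + (0 - (1/2 + a * c))) = a * s + (-(a^2 * c)) + (-(a/2))"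
    by (simp add: algebra_simps power2_eq_square)
  have a2: "-(a * s + (-(a^2 * c)) + (-(a/2))) = (-(a * s)) + (a^2 * c) + (a/2)"
    by (simp add: algebra_simps power2_eq_square)
  have a3: "a * (s + (1 - (1/2 + a * c))) = a * s + (-(a^2 * c)) + (a/2)"
    by (simp add: algebra_simps power2_eq_square)
  have a4: "-(a * s + (-(a^2 * c)) + (a/2)) = (-(a * s)) + (a^2 * c) + (-(a/2))"
    by (simp add: algebra_simps power2_eq_square)
  have w1: "Wf a (s + (0 - (1/2 + a * c))) = exp (a * s) * exp (-(a^2 * c)) * exp (-(a/2)) + exp (-(a * s)) * exp (a^2 * c) * exp (a/2)"
    unfolding Wf_def a1 a2 exp_add by (rule refl)
  have w2: "Wf a (s + (1 - (1/2 + a * c))) = exp (a * s) * exp (-(a^2 * c)) * exp (a/2) + exp (-(a * s)) * exp (a^2 * c) * exp (-(a/2))"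
    unfolding Wf_def a3 a4 exp_add by (rule refl)
  show ?thesis unfolding w1 w2 gen_id hh_def by (rule refl)
qed

lemma hh_nonneg: "0 \<le> hh a" unfolding hh_def by (simp add: add_nonneg_nonneg)

lemma avg_le:
  assumes "0 < a"
  shows "(Wf a (s + (0 - (1/2 + a * sgn s))) + Wf a (s + (1 - (1/2 + a * sgn s)))) / 2
     \<le> qq a * Wf a s + RR a"
proof -
  have d: "0 \<le> exp (a^2) - exp (-(a^2))" by simp
  consider "s > 0" | "s < 0" | "s = 0" by linarith
  then show ?thesis
  proof cases
    case 1
    have e: "exp (-(a * s)) \<le> 1" using 1 assms by simp
    have hlp: "exp (-(a * s)) * (hh a * (exp (a^2) - exp (-(a^2)))) \<le> 1 * (hh a * (exp (a^2) - exp (-(a^2))))"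
      by (rule mult_right_mono[OF e]) (simp add: hh_nonneg d)
    have eq: "(Wf a (s + (0 - (1/2 + a * sgn s))) + Wf a (s + (1 - (1/2 + a * sgn s)))) / 2
      = exp (a * s) * exp (-(a^2)) * hh a + exp (-(a * s)) * exp (a^2) * hh a"
      using avg_eq[of a s 1] 1 by simp
    show ?thesis unfolding eq using hlp
      by (simp add: qq_def RR_def Wf_def algebra_simps del: mult_exp_exp)
  next
    case 2
    have "a * s < 0" using 2 assms by (simp add: mult_pos_neg)
    hence e: "exp ((a * s)) \<le> 1" by simp
    have hlp: "exp ((a * s)) * (hh a * (exp (a^2) - exp (-(a^2)))) \<le> 1 * (hh a * (exp (a^2) - exp (-(a^2))))"
      by (rule mult_right_mono[OF e]) (simp add: hh_nonneg d)
    have eq: "(Wf a (s + (0 - (1/2 + a * sgn s))) + Wf a (s + (1 - (1/2 + a * sgn s)))) / 2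
      = exp (a * s) * exp (a^2) * hh a + exp (-(a * s)) * exp (-(a^2)) * hh a"
      using avg_eq[of a s "-1"] 2 by simp
    show ?thesis unfolding eq using hlp
      by (simp add: qq_def RR_def Wf_def algebra_simps del: mult_exp_exp)
  next
    case 3
    have "2 \<le> exp (a^2) + exp (-(a^2))"
      using exp_ge_add_one_self[of "a^2"] exp_ge_add_one_self[of "-(a^2)"] by linarith
    then have hlp: "2 * hh a \<le> hh a * (exp (a^2) + exp (-(a^2)))"
      using hh_nonneg[of a] by (simp add: mult_left_mono mult.commute)
    have eq: "(Wf a (s + (0 - (1/2 + a * sgn s))) + Wf a (s + (1 - (1/2 + a * sgn s)))) / 2
      = 2 * hh a"
      using avg_eq[of a s 0] 3 by simp
    show ?thesis unfolding eq using hlp 3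
      by (simp add: qq_def RR_def Wf_def algebra_simps del: mult_exp_exp)
  qed
qed

lemma hh_le:
  assumes "0 < a" "a \<le> 1"
  shows "hh a \<le> 1 + a^2/2"
proof -
  define y where "y = a/2"
  have y: "0 < y" "y \<le> 1/2" using assms by (auto simp: y_def)
  have "exp (-y) \<ge> 1 - y" using exp_ge_add_one_self[of "-y"] by simp
  hence e1: "exp y \<le> 1/(1-y)" using y by (simp add: exp_minus field_simps)
  have "exp y \<ge> 1 + y" by simp
  hence e2: "exp (-y) \<le> 1/(1+y)" using y by (simp add: exp_minus field_simps)
  have "hh a = (exp y + exp (-y))/2" by (simp add: hh_def y_def)
  also have "\<dots> \<le> (1/(1-y) + 1/(1+y))/2" using e1 e2 by simp
  also have "\<dots> = 1/(1-y^2)"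
  proof -
    have yy: "y*y \<le> 1/2 * (1/2)" using mult_mono[of y "1/2" y "1/2"] y by auto
    have "1 - y \<noteq> 0" "1 + y \<noteq> 0" "1 - y^2 \<noteq> 0" "1 - y*y \<noteq> 0" using y yy by (auto simp: power2_eq_square)
    thus ?thesis by (simp add: field_simps power2_eq_square)
  qed
  also have "\<dots> \<le> 1 + 2*y^2"
  proof -
    have "y^2 \<le> 1/4" using mult_mono[of y "1/2" y "1/2"] y by (auto simp: power2_eq_square)
    hence "0 \<le> y^2 * (1 - 2*y^2)" by (intro mult_nonneg_nonneg) auto
    moreover have "(1 + 2*y^2) * (1 - y^2) = 1 + y^2 * (1 - 2*y^2)" by (simp add: algebra_simps)
    ultimately have "1 \<le> (1 + 2*y^2) * (1 - y^2)" by linarith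
    moreover have "0 < 1 - y^2" using \<open>y^2 \<le> 1/4\<close> by simp
    ultimately show ?thesis by (simp add: field_simps)
  qed
  also have "\<dots> = 1 + a^2/2" by (simp add: y_def power2_eq_square)
  finally show ?thesis .
qed

lemma qR_bound:
  assumes "0 < a" "a \<le> 1"
  shows "qq a * 24 + RR a \<le> 24"
proof -
  have a2: "0 < a^2" "a^2 \<le> 1" using assms by (auto simp: power_le_one)
  have h: "hh a \<le> 1 + a^2/2" by (rule hh_le[OF assms])
  have h0: "0 \<le> hh a" by (rule hh_nonneg)
  have em: "exp (-(a^2)) \<le> 1/(1+a^2)"
  proof -
    have "1 + a^2 \<le> exp (a^2)" by (rule exp_ge_add_one_self)
    moreover have "0 < 1 + a^2" by (metis a2(1) add_pos_pos zero_less_one)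
    ultimately have "1/exp (a^2) \<le> 1/(1+a^2)" by (intro divide_left_mono) auto
    thus ?thesis by (simp add: exp_minus inverse_eq_divide)
  qed
  have q: "qq a \<le> (1 + a^2/2) / (1+a^2)"
  proof -
    have "exp (-(a^2)) * hh a \<le> (1/(1+a^2)) * (1 + a^2/2)"
      using em h h0 a2 by (intro mult_mono) auto
    thus ?thesis by (simp add: qq_def)
  qed
  have ep: "exp (a^2) \<le> 1 + 3 * a^2"
  proof -
    have "1 - a^2 \<le> exp (-(a^2))" using exp_ge_add_one_self[of "-(a^2)"] by simp
    hence "exp (a^2) * (1 - a^2) \<le> 1" by (simp add: exp_minus field_simps)
    hence "exp (a^2) \<le> 1 + a^2 * exp (a^2)" by (simp add: algebra_simps)
    moreover have "exp (a^2) \<le> 3" using exp_le a2 by (meson exp_le_cancel_iff order_trans)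
    moreover have "a^2 * exp (a^2) \<le> a^2 * 3" using \<open>exp (a^2) \<le> 3\<close> a2 by (intro mult_left_mono) auto
    ultimately show ?thesis by linarith
  qed
  have en: "1 - a^2 \<le> exp (-(a^2))" using exp_ge_add_one_self[of "-(a^2)"] by simp
  have R: "RR a \<le> 6 * a^2"
  proof -
    have "RR a \<le> hh a * (4 * a^2)" unfolding RR_def using ep en h0
      by (intro mult_left_mono) auto
    also have "\<dots> \<le> (3/2) * (4 * a^2)" using h a2 by (intro mult_right_mono) auto
    finally show ?thesis by simp
  qed
  have "qq a * 24 \<le> (1 + a^2/2) / (1+a^2) * 24" using q by (intro mult_right_mono) auto
  hence "qq a * 24 \<le> 24 * (1 + a^2/2) / (1+a^2)" by simp
  moreover have "24 * (1 + a^2/2) / (1+a^2) + 6 * a^2 \<le> 24"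
  proof -
    define u where "u = a^2"
    have u: "0 < u" "u \<le> 1" using a2 by (auto simp: u_def)
    have uu: "u * u \<le> u * 1" using u by (intro mult_left_mono) auto
    have "24 * (1 + u/2) / (1+u) + 6 * u \<le> 24"
      using u uu by (simp add: field_simps)
    thus ?thesis by (simp add: u_def)
  qed
  ultimately show ?thesis using R by linarith
qed

lemma fcS_upd: "k < m \<Longrightarrow> fcS a (x(m := b)) k = fcS a x k"
  by (induction k) auto

lemma fcS_step_upd:
  "fcS a (x(Suc n := b)) (Suc n) = fcS a x n + (b - (1/2 + a * sgn (fcS a x n)))"
  by (simp add: fcS_upd)

lemma EW:
  assumes "0 < a" "a \<le> 1"
  shows "Ex n (\<lambda>x. Wf a (fcS a x n)) \<le> 24"
proof (induction n)
  case 0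
  show ?case by (simp add: Ex_const Wf_def)
next
  case (Suc n)
  have q0: "0 \<le> qq a" unfolding qq_def using hh_nonneg by simp
  have "Ex (Suc n) (\<lambda>x. Wf a (fcS a x (Suc n)))
      = Ex n (\<lambda>x. (Wf a (fcS a x n + (0 - (1/2 + a * sgn (fcS a x n))))
                 + Wf a (fcS a x n + (1 - (1/2 + a * sgn (fcS a x n))))) / 2)"
    unfolding Ex_step fcS_step_upd by simp
  also have "\<dots> \<le> Ex n (\<lambda>x. qq a * Wf a (fcS a x n) + RR a)"
    by (rule Ex_mono, rule avg_le[OF assms(1)])
  also have "\<dots> = qq a * Ex n (\<lambda>x. Wf a (fcS a x n)) + RR a"
    by (simp add: Ex_add Ex_cmult Ex_const)
  also have "\<dots> \<le> qq a * 24 + RR a"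
    using Suc q0 by (simp add: mult_left_mono)
  also have "\<dots> \<le> 24" by (rule qR_bound[OF assms])
  finally show ?case .
qed

definition Mg :: "real \<Rightarrow> real \<Rightarrow> (nat \<Rightarrow> real) \<Rightarrow> nat \<Rightarrow> real" where
  "Mg \<sigma> a x n = (\<Sum>u=1..n. if sgn (fcS a x (u - 1)) = \<sigma> then x u - 1/2 else 0)"

lemma Mg_upd:
  "Mg \<sigma> a (x(Suc n := b)) (Suc n) = Mg \<sigma> a x n + (if sgn (fcS a x n) = \<sigma> then b - 1/2 else 0)"
proof -
  have "(\<Sum>u=1..n. if sgn (fcS a (x(Suc n := b)) (u - 1)) = \<sigma> then (x(Suc n := b)) u - 1/2 else 0)
      = (\<Sum>u=1..n. if sgn (fcS a x (u - 1)) = \<sigma> then x u - 1/2 else 0)"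
    by (intro sum.cong refl) (auto simp: fcS_upd)
  thus ?thesis unfolding Mg_def by (simp add: fcS_upd)
qed

lemma EM: "Ex n (\<lambda>x. (Mg \<sigma> a x n)^2) \<le> real n / 4"
proof (induction n)
  case 0
  show ?case by (simp add: Ex_const Mg_def)
next
  case (Suc n)
  have "Ex (Suc n) (\<lambda>x. (Mg \<sigma> a x (Suc n))^2)
      = Ex n (\<lambda>x. ((Mg \<sigma> a x n + (if sgn (fcS a x n) = \<sigma> then 0 - 1/2 else 0))^2
                 + (Mg \<sigma> a x n + (if sgn (fcS a x n) = \<sigma> then 1 - 1/2 else 0))^2) / 2)"
    unfolding Ex_step Mg_upd by simp
  also have "\<dots> \<le> Ex n (\<lambda>x. (Mg \<sigma> a x n)^2 + 1/4)"
    by (rule Ex_mono) (auto simp: power2_eq_square field_simps)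
  also have "\<dots> = Ex n (\<lambda>x. (Mg \<sigma> a x n)^2) + 1/4"
    by (simp add: Ex_add Ex_const)
  also have "\<dots> \<le> real (Suc n) / 4" using Suc by simp
  finally show ?case .
qed

lemma fcS_sum: "fcS a x n = (\<Sum>t=1..n. x t - fcP a x t)"
  by (induction n) (auto simp: fcP_def)

definition Dg :: "real \<Rightarrow> real \<Rightarrow> (nat \<Rightarrow> real) \<Rightarrow> nat \<Rightarrow> real" where
  "Dg \<sigma> a x n = (\<Sum>t=1..n. if sgn (fcS a x (t - 1)) = \<sigma> then x t - fcP a x t else 0)"

lemma Dg_Mg:
  assumes "0 \<le> a" "\<bar>\<sigma>\<bar> \<le> 1"
  shows "\<bar>Dg \<sigma> a x n\<bar> \<le> \<bar>Mg \<sigma> a x n\<bar> + a * n"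
proof -
  have "Dg \<sigma> a x n - Mg \<sigma> a x n = (\<Sum>t=1..n. if sgn (fcS a x (t - 1)) = \<sigma> then -(a * \<sigma>) else 0)"
    unfolding Dg_def Mg_def sum_subtractf[symmetric]
    by (intro sum.cong refl) (auto simp: fcP_def)
  also have "\<bar>\<dots>\<bar> \<le> (\<Sum>t=1..n. \<bar>if sgn (fcS a x (t - 1)) = \<sigma> then -(a * \<sigma>) else 0\<bar>)"
    by (rule sum_abs)
  also have "\<dots> \<le> (\<Sum>t=1..n. a)"
  proof (rule sum_mono)
    fix t
    have "a * \<bar>\<sigma>\<bar> \<le> a * 1" using assms by (intro mult_left_mono) auto
    hence "\<bar>a * \<sigma>\<bar> \<le> a * 1" using assms by (simp add: abs_mult)
    thus "\<bar>if sgn (fcS a x (t - 1)) = \<sigma> then -(a * \<sigma>) else 0\<bar> \<le> a" using assms by auto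
  qed
  also have "\<dots> = a * n" by simp
  finally show ?thesis by linarith
qed

lemma sum_split3:
  fixes f :: "real \<Rightarrow> real"
  shows "(\<Sum>t=1..n. f (fcP a x t) * (x t - fcP a x t))
    = f (1/2) * fcS a x n + (f (1/2 + a) - f (1/2)) * Dg 1 a x n + (f (1/2 - a) - f (1/2)) * Dg (-1) a x n"
proof -
  have "(\<Sum>t=1..n. f (fcP a x t) * (x t - fcP a x t))
    = (\<Sum>t=1..n. f (1/2) * (x t - fcP a x t)
        + ((f (1/2 + a) - f (1/2)) * (if sgn (fcS a x (t - 1)) = 1 then x t - fcP a x t else 0)
        + (f (1/2 - a) - f (1/2)) * (if sgn (fcS a x (t - 1)) = -1 then x t - fcP a x t else 0)))"
  proof (intro sum.cong refl)
    fix t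
    consider "sgn (fcS a x (t - 1)) = 1" | "sgn (fcS a x (t - 1)) = -1" | "sgn (fcS a x (t - 1)) = 0"
      by (metis sgn_real_def)
    thus "f (fcP a x t) * (x t - fcP a x t) = f (1/2) * (x t - fcP a x t)
        + ((f (1/2 + a) - f (1/2)) * (if sgn (fcS a x (t - 1)) = 1 then x t - fcP a x t else 0)
        + (f (1/2 - a) - f (1/2)) * (if sgn (fcS a x (t - 1)) = -1 then x t - fcP a x t else 0))"
      by cases (auto simp: fcP_def algebra_simps)
  qed
  also have "\<dots> = f (1/2) * fcS a x n + (f (1/2 + a) - f (1/2)) * Dg 1 a x n + (f (1/2 - a) - f (1/2)) * Dg (-1) a x n"
    unfolding fcS_sum Dg_def by (simp add: sum.distrib sum_distrib_left)
  finally show ?thesis .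
qed

lemma smCE_bound:
  assumes "0 \<le> a"
  shows "smCE n x (fcP a x) \<le> \<bar>fcS a x n\<bar> + a * \<bar>Dg 1 a x n\<bar> + a * \<bar>Dg (-1) a x n\<bar>"
  unfolding smCE_def
proof (rule cSUP_least)
  show "smF \<noteq> {}"
  proof -
    have "(\<lambda>_. 0) \<in> smF" unfolding smF_def by (auto simp: lipschitz_on_def)
    thus ?thesis by blast
  qed
next
  fix f assume "f \<in> smF"
  hence L: "\<And>u v. \<bar>f u - f v\<bar> \<le> \<bar>u - v\<bar>" and B: "\<And>y. \<bar>f y\<bar> \<le> 1"
    unfolding smF_def lipschitz_on_def by (auto simp: dist_real_def)
  have 1: "f (1/2) * fcS a x n \<le> \<bar>fcS a x n\<bar>"
  proof -
    have "\<bar>f (1/2)\<bar> * \<bar>fcS a x n\<bar> \<le> 1 * \<bar>fcS a x n\<bar>" using B[of "1/2"] by (intro mult_right_mono) auto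
    hence "\<bar>f (1/2) * fcS a x n\<bar> \<le> \<bar>fcS a x n\<bar>" by (simp add: abs_mult)
    thus ?thesis by linarith
  qed
  have 2: "(f (1/2 + a) - f (1/2)) * Dg 1 a x n \<le> a * \<bar>Dg 1 a x n\<bar>"
  proof -
    have "\<bar>f (1/2 + a) - f (1/2)\<bar> \<le> a" using L[of "1/2 + a" "1/2"] assms by simp
    hence "\<bar>(f (1/2 + a) - f (1/2)) * Dg 1 a x n\<bar> \<le> a * \<bar>Dg 1 a x n\<bar>"
      by (simp add: abs_mult mult_right_mono)
    thus ?thesis by linarith
  qed
  have 3: "(f (1/2 - a) - f (1/2)) * Dg (-1) a x n \<le> a * \<bar>Dg (-1) a x n\<bar>"
  proof -
    have "\<bar>f (1/2 - a) - f (1/2)\<bar> \<le> a" using L[of "1/2 - a" "1/2"] assms by simp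
    hence "\<bar>(f (1/2 - a) - f (1/2)) * Dg (-1) a x n\<bar> \<le> a * \<bar>Dg (-1) a x n\<bar>"
      by (simp add: abs_mult mult_right_mono)
    thus ?thesis by linarith
  qed
  show "(\<Sum>t=1..n. f (fcP a x t) * (x t - fcP a x t)) \<le> \<bar>fcS a x n\<bar> + a * \<bar>Dg 1 a x n\<bar> + a * \<bar>Dg (-1) a x n\<bar>"
    unfolding sum_split3 using 1 2 3 by linarith
qed

lemma Ex_cdiv: "Ex n (\<lambda>x. h x / c) = Ex n h / c"
  unfolding Ex_def by (simp add: sum_divide_distrib mult.commute)

lemma abs_le_Wf:
  assumes "0 < a"
  shows "\<bar>s\<bar> \<le> Wf a s / a"
proof -
  have "1 + a * \<bar>s\<bar> \<le> exp (a * \<bar>s\<bar>)" by (rule exp_ge_add_one_self)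
  moreover have "exp (a * \<bar>s\<bar>) \<le> Wf a s"
    unfolding Wf_def using assms by (cases "s \<ge> 0") (auto simp: abs_if)
  ultimately have "a * \<bar>s\<bar> \<le> Wf a s" by linarith
  thus ?thesis using assms by (simp add: field_simps)
qed

lemma amgm:
  fixes a m :: real
  assumes "0 < a"
  shows "a * \<bar>m\<bar> \<le> a^3 / 2 * m^2 + 1 / (2 * a)"
proof -
  have "0 \<le> (a^2 * \<bar>m\<bar> - 1)^2" by simp
  moreover have "(a^2 * \<bar>m\<bar> - 1)^2 = (a^2 * \<bar>m\<bar>)^2 - 2 * a^2 * \<bar>m\<bar> + 1"
    by (simp add: power2_diff)
  moreover have "(a^2 * \<bar>m\<bar>)^2 = a^4 * m^2"
    by (simp add: power_mult_distrib flip: power_mult)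
  ultimately have "2 * a^2 * \<bar>m\<bar> \<le> a^4 * m^2 + 1" by linarith
  hence "(2 * a^2 * \<bar>m\<bar>) / (2 * a) \<le> (a^4 * m^2 + 1) / (2 * a)" using assms by (intro divide_right_mono) auto
  moreover have "(2 * a^2 * \<bar>m\<bar>) / (2 * a) = a * \<bar>m\<bar>" using assms by (simp add: power2_eq_square)
  moreover have "(a^4 * m^2 + 1) / (2 * a) = a^3 / 2 * m^2 + 1 / (2 * a)" using assms
    by (simp add: field_simps power_numeral_reduce)
  ultimately show ?thesis by simp
qed

lemma pointwise:
  assumes "0 < a"
  shows "smCE n x (fcP a x) \<le> Wf a (fcS a x n) / a + a^3 / 2 * (Mg 1 a x n)^2 + a^3 / 2 * (Mg (-1) a x n)^2
     + 1 / a + 2 * a^2 * n"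
proof -
  have "smCE n x (fcP a x) \<le> \<bar>fcS a x n\<bar> + a * \<bar>Dg 1 a x n\<bar> + a * \<bar>Dg (-1) a x n\<bar>"
    using smCE_bound assms by simp
  also have "\<dots> \<le> \<bar>fcS a x n\<bar> + a * (\<bar>Mg 1 a x n\<bar> + a * n) + a * (\<bar>Mg (-1) a x n\<bar> + a * n)"
    using Dg_Mg[of a 1 x n] Dg_Mg[of a "-1" x n] assms
    by (intro add_mono mult_left_mono) auto
  also have "\<dots> = \<bar>fcS a x n\<bar> + a * \<bar>Mg 1 a x n\<bar> + a * \<bar>Mg (-1) a x n\<bar> + 2 * a^2 * n"
    by (simp add: algebra_simps power2_eq_square)
  also have "\<dots> \<le> Wf a (fcS a x n) / a + (a^3 / 2 * (Mg 1 a x n)^2 + 1 / (2 * a))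
      + (a^3 / 2 * (Mg (-1) a x n)^2 + 1 / (2 * a)) + 2 * a^2 * n"
    using abs_le_Wf[OF assms] amgm[OF assms] by (intro add_mono) auto
  also have "\<dots> = Wf a (fcS a x n) / a + a^3 / 2 * (Mg 1 a x n)^2 + a^3 / 2 * (Mg (-1) a x n)^2
     + 1 / a + 2 * a^2 * n" by (simp add: field_simps)
  finally show ?thesis .
qed

lemma expect_bound:
  assumes "0 < a" "a \<le> 1"
  shows "Ex n (\<lambda>x. smCE n x (fcP a x)) \<le> 25 / a + a^3 * n / 4 + 2 * a^2 * n"
proof -
  have "Ex n (\<lambda>x. smCE n x (fcP a x)) \<le> Ex n (\<lambda>x. (1/a) * Wf a (fcS a x n) + ((a^3 / 2) * (Mg 1 a x n)^2
     + ((a^3 / 2) * (Mg (-1) a x n)^2 + (1 / a + 2 * a^2 * n))))"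
    by (rule Ex_mono) (use pointwise[OF assms(1)] in \<open>simp add: add.assoc\<close>)
  also have "\<dots> = (1/a) * Ex n (\<lambda>x. Wf a (fcS a x n)) + (a^3/2) * Ex n (\<lambda>x. (Mg 1 a x n)^2)
      + (a^3/2) * Ex n (\<lambda>x. (Mg (-1) a x n)^2) + (1 / a + 2 * a^2 * n)"
    by (simp add: Ex_add Ex_cmult Ex_const Ex_cdiv)
  also have "\<dots> \<le> (1/a) * 24 + (a^3/2) * (n/4) + (a^3/2) * (n/4) + (1 / a + 2 * a^2 * n)"
    using EW[OF assms, of n] EM[of n 1 a] EM[of n "-1" a] assms
    by (intro add_mono mult_left_mono) auto
  also have "\<dots> = 25 / a + a^3 * n / 4 + 2 * a^2 * n" by (simp add: field_simps)
  finally show ?thesis .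
qed

theorem lemma8:
  shows "\<exists>C::real. \<forall>T::nat. T \<ge> 1 \<longrightarrow>
    (\<Sum>x\<in>{1..T} \<rightarrow>\<^sub>E {0, 1::real}. smCE T x (fcP (real T powr (-1/3)) x)) / 2 ^ T
      \<le> C * real T powr (1/3)"
proof (intro exI allI impI)
  fix T :: nat assume T: "T \<ge> 1"
  define a where "a = real T powr (-1/3)"
  have Tp: "real T > 0" using T by simp
  have a0: "0 < a" unfolding a_def using Tp by simp
  have a1: "a \<le> 1" unfolding a_def using T by (simp add: powr_le_one_le ge_one_powr_ge_zero powr_minus_divide)
  have ia: "1 / a = real T powr (1/3)" unfolding a_def using Tp by (simp add: powr_minus_divide)
  have a3: "a^3 * T = 1"
  proof -
    have "a^3 * T = a * a * a * real T powr 1" using Tp by (simp add: power3_eq_cube)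
    also have "\<dots> = real T powr (-1/3 + -1/3 + -1/3 + 1)" unfolding a_def using Tp by (simp only: powr_add)
    also have "\<dots> = 1" using Tp by simp
    finally show ?thesis .
  qed
  have a2: "a^2 * T = real T powr (1/3)"
  proof -
    have "a^2 * T = a * a * real T powr 1" using Tp by (simp add: power2_eq_square)
    also have "\<dots> = real T powr (-1/3 + -1/3 + 1)" unfolding a_def using Tp by (simp only: powr_add)
    finally show ?thesis by simp
  qed
  have t1: "1 \<le> real T powr (1/3)" using T Tp by (intro ge_one_powr_ge_zero) linarith+
  have "(\<Sum>x\<in>{1..T} \<rightarrow>\<^sub>E {0, 1::real}. smCE T x (fcP a x)) / 2 ^ T = Ex T (\<lambda>x. smCE T x (fcP a x))"
    by (simp add: Ex_def)
  also have "\<dots> \<le> 25 / a + a^3 * T / 4 + 2 * a^2 * T" by (rule expect_bound[OF a0 a1])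
  also have "\<dots> = 25 * real T powr (1/3) + 1/4 + 2 * real T powr (1/3)"
    using ia a3 a2 by (simp add: field_simps)
  also have "\<dots> \<le> 28 * real T powr (1/3)" using t1 by simp
  finally show "(\<Sum>x\<in>{1..T} \<rightarrow>\<^sub>E {0, 1::real}. smCE T x (fcP (real T powr (-1/3)) x)) / 2 ^ T
      \<le> 28 * real T powr (1/3)" unfolding a_def .
qed

end
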